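(* Let $r,m\ge0$ and $k\ge1$ be integers with $r+m\equiv1\pmod 2$, and let $n\ge0$. Then $$\lim_{q\to-1}\frac{\sum_{j=0}^{2n}q^{rj^2+mj}\begin{bmatrix} 2n\\ j\end{bmatrix}_{q^{2k}}}{(-q;q)_{2n}}=(k-r)^n,\qquad \lim_{q\to-1}\frac{\sum_{j=0}^{2n+1}q^{rj^2+mj}\begin{bmatrix} 2n+1\\ j\end{bmatrix}_{q^{2k}}}{(-q;q)_{2n+1}}=\big((2n+1)r+m\big)(k-r)^n.$$
   Context: $(x;q)_n=\prod_{j=0}^{n-1}(1-q^jx)$. The Gaussian binomial coefficient is $\begin{bmatrix} n\\ j\end{bmatrix}_q=\frac{(q;q)_n}{(q;q)_j(q;q)_{n-j}}$ for $0\le j\le n$, a polynomial in $q$; $\begin{bmatrix} n\\ j\end{bmatrix}_{q^{2k}}$ is this with $q$ replaced by $q^{2k}$. The quotients are rational functions of $q$ and the limits are taken as $q\to-1$. *)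

theory Defs
  imports Complex_Main
begin

definition qpoch :: "real \<Rightarrow> real \<Rightarrow> nat \<Rightarrow> real" where
  "qpoch x q n = (\<Prod>j<n. 1 - q ^ j * x)"

definition gauss_binom :: "real \<Rightarrow> nat \<Rightarrow> nat \<Rightarrow> real" where
  "gauss_binom q n j = qpoch q q n / (qpoch q q j * qpoch q q (n - j))"

end

theory Submission
  imports Defs "HOL-Computational_Algebra.Polynomial_FPS"
begin

unbundle fps_syntax


definition ev :: "real \<Rightarrow> real poly fps \<Rightarrow> real fps" where
  "ev a F = Abs_fps (\<lambda>i. poly (F $ i) a)"

lemma ev_nth[simp]: "ev a F $ i = poly (F$i) a" by (simp add: ev_def)
lemma ev_add[simp]: "ev a (F+G) = ev a F + ev a G" by (simp add: fps_eq_iff)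
lemma ev_diff[simp]: "ev a (F-G) = ev a F - ev a G" by (simp add: fps_eq_iff)
lemma ev_uminus[simp]: "ev a (-F) = - ev a F" by (simp add: fps_eq_iff)
lemma ev_1[simp]: "ev a 1 = 1" by (simp add: fps_eq_iff)
lemma ev_0[simp]: "ev a 0 = 0" by (simp add: fps_eq_iff)
lemma ev_mult[simp]: "ev a (F*G) = ev a F * ev a G"
  by (simp add: fps_eq_iff fps_mult_nth poly_sum)
lemma ev_sum[simp]: "ev a (sum f S) = (\<Sum>x\<in>S. ev a (f x))"
  by (induction S rule: infinite_finite_induct) auto
lemma ev_pow[simp]: "ev a (F ^ n) = ev a F ^ n"
  by (induction n) auto
lemma ev_inj: assumes "\<And>a. ev a F = ev a G" shows "F = G"
proof (rule fps_ext)
  fix n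
  have "poly (F$n) = poly (G$n)"
  proof
    fix a show "poly (F$n) a = poly (G$n) a" using assms[of a] by (metis ev_nth)
  qed
  thus "F$n = G$n" by (simp add: poly_eq_poly_eq_iff)
qed

definition EP :: "real poly \<Rightarrow> real poly fps" where
  "EP p = Abs_fps (\<lambda>l. smult (1 / fact l) (\<Prod>s<l. p - [:of_nat s:]))"

lemma EP_nth: "EP p $ l = smult (1 / fact l) (\<Prod>s<l. p - [:of_nat s:])"
  by (simp add: EP_def)

lemma ev_EP[simp]: "ev a (EP p) = fps_binomial (poly p a)"
  by (simp add: fps_eq_iff EP_nth gbinomial_prod_rev poly_prod atLeast0LessThan)

definition CP :: "real fps \<Rightarrow> real poly fps" where
  "CP F = Abs_fps (\<lambda>i. [:F$i:])"
lemma ev_CP[simp]: "ev a (CP F) = F" by (simp add: fps_eq_iff CP_def)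

definition sh :: "real \<Rightarrow> real poly fps \<Rightarrow> real poly fps" where
  "sh h F = Abs_fps (\<lambda>i. pcompose (F$i) [:h,1:])"
lemma ev_sh[simp]: "ev a (sh h F) = ev (h + a) F" by (simp add: fps_eq_iff sh_def poly_pcompose)

definition rf :: "real \<Rightarrow> real poly fps \<Rightarrow> real poly fps" where
  "rf c F = Abs_fps (\<lambda>i. pcompose (F$i) [:c,-1:])"
lemma ev_rf[simp]: "ev a (rf c F) = ev (c - a) F" by (simp add: fps_eq_iff rf_def poly_pcompose)

fun QBf :: "nat \<Rightarrow> nat \<Rightarrow> nat \<Rightarrow> real fps" where
  "QBf k 0 j = (if j = 0 then 1 else 0)"
| "QBf k (Suc N) 0 = 1"
| "QBf k (Suc N) (Suc j) = QBf k N j + fps_binomial (of_nat (2*k*Suc j)) * QBf k N (Suc j)"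

lemma QBf_0[simp]: "QBf k N 0 = 1" by (cases N) auto
lemma QBf_gt: "N < j \<Longrightarrow> QBf k N j = 0"
proof (induction N arbitrary: j)
  case 0 thus ?case by simp
next
  case (Suc N) then obtain i where "j = Suc i" by (cases j) auto
  with Suc show ?case by simp
qed
lemma QBf_diag[simp]: "QBf k N N = 1"
  by (induction N) (auto simp: QBf_gt)

definition Sf :: "nat \<Rightarrow> nat \<Rightarrow> nat \<Rightarrow> real \<Rightarrow> real fps" where
  "Sf r k N a = (\<Sum>j=0..N. (-1)^j * fps_binomial (of_nat r * of_nat j^2 + a * of_nat j) * QBf k N j)"

lemma Sf_rec: "Sf r k (Suc N) a = Sf r k N (a + 2*k) - fps_binomial (r + a) * Sf r k N (a + 2*r)"
proof -
  define E where "E = (fps_binomial :: real \<Rightarrow> real fps)"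
  have Eadd: "\<And>x y. E (x+y) = E x * E y" by (simp add: E_def fps_binomial_add_mult)
  have "Sf r k (Suc N) a = 1 + (\<Sum>i=0..N. (-1)^Suc i * E (of_nat r * of_nat (Suc i)^2 + a * of_nat (Suc i))
        * (QBf k N i + E (of_nat (2*k*Suc i)) * QBf k N (Suc i)))"
    unfolding Sf_def E_def by (subst sum.atLeast0_atMost_Suc_shift) simp
  also have "\<dots> = (1 + (\<Sum>i=0..N. (-1)^Suc i * E (of_nat r * of_nat (Suc i)^2 + (a+2*k) * of_nat (Suc i)) * QBf k N (Suc i)))
       - E (r + a) * (\<Sum>i=0..N. (-1)^i * E (of_nat r * of_nat i^2 + (a + 2*r) * of_nat i) * QBf k N i)"
  proof -
    have e1: "E (of_nat r * of_nat (Suc i)^2 + a * of_nat (Suc i)) = E (r + a) * E (of_nat r * of_nat i^2 + (a + 2*r) * of_nat i)" for i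
      by (subst Eadd[symmetric]) (simp add: algebra_simps power2_eq_square)
    have e2: "E (of_nat r * of_nat (Suc i)^2 + a * of_nat (Suc i)) * E (of_nat (2*k*Suc i)) = E (of_nat r * of_nat (Suc i)^2 + (a+2*k) * of_nat (Suc i))" for i
      by (subst Eadd[symmetric]) (simp add: algebra_simps)
    have t: "(-1)^Suc i * E (of_nat r * of_nat (Suc i)^2 + a * of_nat (Suc i)) * (QBf k N i + E (of_nat (2*k*Suc i)) * QBf k N (Suc i))
      = (-1)^Suc i * E (of_nat r * of_nat (Suc i)^2 + (a+2*k) * of_nat (Suc i)) * QBf k N (Suc i)
        - E (r + a) * ((-1)^i * E (of_nat r * of_nat i^2 + (a + 2*r) * of_nat i) * QBf k N i)" for i
      by (simp only: e2[symmetric] e1) (simp add: algebra_simps)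
    show ?thesis
      by (simp only: t sum_subtractf sum_distrib_left) (simp add: algebra_simps)
  qed
  also have "1 + (\<Sum>i=0..N. (-1)^Suc i * E (of_nat r * of_nat (Suc i)^2 + (a+2*k) * of_nat (Suc i)) * QBf k N (Suc i))
      = Sf r k N (a + 2*k)"
  proof -
    have "Sf r k N (a + 2*k) = (\<Sum>j=0..Suc N. (-1)^j * E (of_nat r * of_nat j^2 + (a+2*k) * of_nat j) * QBf k N j)"
      unfolding Sf_def E_def by (simp add: QBf_gt)
    also have "\<dots> = 1 + (\<Sum>i=0..N. (-1)^Suc i * E (of_nat r * of_nat (Suc i)^2 + (a+2*k) * of_nat (Suc i)) * QBf k N (Suc i))"
      by (subst sum.atLeast0_atMost_Suc_shift) (simp add: E_def)
    finally show ?thesis by simp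
  qed
  finally show ?thesis unfolding Sf_def E_def by simp
qed



definition Pq :: "nat \<Rightarrow> nat \<Rightarrow> real fps" where
  "Pq k n = (\<Prod>i<n. 1 - fps_binomial (of_nat (2*k*Suc i)))"

lemma Pq_Suc: "Pq k (Suc n) = Pq k n * (1 - fps_binomial (of_nat (2*k*Suc n)))"
  by (simp add: Pq_def)

lemma QBf_prod: "j \<le> N \<Longrightarrow> QBf k N j * Pq k j * Pq k (N - j) = Pq k N"
proof (induction N arbitrary: j)
  case 0 thus ?case by (simp add: Pq_def)
next
  case (Suc N)
  show ?case
  proof (cases j)
    case 0 thus ?thesis by (simp add: Pq_def)
  next
    case (Suc i)
    define p where "p = (\<lambda>s. fps_binomial (of_nat (2*k*s)) :: real fps)"
    have padd: "p (a + b) = p a * p b" for a b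
      by (simp add: p_def fps_binomial_add_mult[symmetric] algebra_simps)
    show ?thesis
    proof (cases "i = N")
      case True
      thus ?thesis using Suc by (simp add: QBf_gt Pq_def)
    next
      case False
      with Suc Suc.prems have iN: "Suc i \<le> N" by simp
      have h1: "QBf k N i * Pq k i * Pq k (N - i) = Pq k N" using Suc.IH[of i] iN by simp
      have h2: "QBf k N (Suc i) * Pq k (Suc i) * Pq k (N - Suc i) = Pq k N" using Suc.IH[of "Suc i"] iN by simp
      have PqS: "Pq k (Suc n) = Pq k n * (1 - p (Suc n))" for n by (simp add: Pq_Suc p_def algebra_simps)
      have NS: "N - i = Suc (N - Suc i)" using iN by simp
      have pp: "p (Suc i) * p (N - i) = p (Suc N)" using iN by (simp add: padd[symmetric])
      have "QBf k (Suc N) j * Pq k j * Pq k (Suc N - j)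
          = (QBf k N i + p (Suc i) * QBf k N (Suc i)) * Pq k (Suc i) * Pq k (N - i)"
        using Suc by (simp add: p_def algebra_simps)
      also have "\<dots> = QBf k N i * Pq k i * Pq k (N - i) * (1 - p (Suc i))
           + p (Suc i) * (QBf k N (Suc i) * Pq k (Suc i) * Pq k (N - Suc i)) * (1 - p (N - i))"
        by (simp add: PqS NS algebra_simps)
      also have "\<dots> = Pq k N * ((1 - p (Suc i)) + p (Suc i) * (1 - p (N - i)))"
        by (simp only: h1 h2) (simp add: algebra_simps)
      also have "\<dots> = Pq k N * (1 - p (Suc N))"
        by (simp add: algebra_simps pp[symmetric])
      finally show ?thesis by (simp add: PqS)
    qed
  qed
qed

lemma Pq_nz: "k \<ge> 1 \<Longrightarrow> Pq k n \<noteq> 0"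
proof -
  assume k: "k \<ge> 1"
  have "1 - fps_binomial (of_nat (2*k*Suc i)) \<noteq> (0::real fps)" for i
  proof
    assume "1 - fps_binomial (of_nat (2*k*Suc i)) = (0::real fps)"
    hence "(1 - fps_binomial (of_nat (2*k*Suc i)) :: real fps) $ 1 = 0" by simp
    moreover have "(1 - fps_binomial (of_nat (2*k*Suc i)) :: real fps) $ 1 = - (2 * real k * (1 + real i))" by (simp add: algebra_simps)
    moreover have "2 * real k * (1 + real i) > 0" using k by simp
    ultimately show False by linarith
  qed
  thus ?thesis by (simp add: Pq_def)
qed

lemma QBf_sym: "k \<ge> 1 \<Longrightarrow> j \<le> N \<Longrightarrow> QBf k N (N - j) = QBf k N j"
proof -
  assume k: "k \<ge> 1" and j: "j \<le> N"
  have "QBf k N (N - j) * (Pq k j * Pq k (N - j)) = QBf k N j * (Pq k j * Pq k (N - j))"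
    using QBf_prod[of j N k] QBf_prod[of "N-j" N k] j by (simp add: algebra_simps)
  moreover have "Pq k j * Pq k (N - j) \<noteq> 0" using Pq_nz[OF k] by simp
  ultimately show ?thesis by simp
qed

lemma Sf_sym: "k \<ge> 1 \<Longrightarrow> Sf r k N a = (-1)^N * fps_binomial (of_nat r * of_nat N^2 + a * of_nat N) * Sf r k N (- 2 * of_nat r * of_nat N - a)"
proof -
  assume k: "k \<ge> 1"
  define E where "E = (fps_binomial :: real \<Rightarrow> real fps)"
  have Eadd: "\<And>x y. E (x+y) = E x * E y" by (simp add: E_def fps_binomial_add_mult)
  have "(-1)^N * E (of_nat r * of_nat N^2 + a * of_nat N) * Sf r k N (- 2 * of_nat r * of_nat N - a)
     = (\<Sum>j=0..N. (-1)^(N+j) * E (of_nat r * of_nat N^2 + a * of_nat N + (of_nat r * of_nat j^2 + (- 2 * of_nat r * of_nat N - a) * of_nat j)) * QBf k N j)"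
    unfolding Sf_def E_def[symmetric] sum_distrib_left
  proof (rule sum.cong)
    fix j
    let ?A = "of_nat r * of_nat N^2 + a * of_nat N" and ?B = "of_nat r * of_nat j^2 + (- 2 * of_nat r * of_nat N - a) * of_nat j"
    show "(-1)^N * E ?A * ((-1)^j * E ?B * QBf k N j) = (-1)^(N+j) * E (?A + ?B) * QBf k N j"
      by (simp only: Eadd[of ?A ?B] power_add) (simp add: mult_ac)
  qed simp
  also have "\<dots> = (\<Sum>j=0..N. (-1)^(N+(N-j)) * E (of_nat r * of_nat N^2 + a * of_nat N + (of_nat r * of_nat (N-j)^2 + (- 2 * of_nat r * of_nat N - a) * of_nat (N-j))) * QBf k N (N-j))"
    by (subst sum.atLeastAtMost_rev) simp
  also have "\<dots> = (\<Sum>j=0..N. (-1)^j * E (of_nat r * of_nat j^2 + a * of_nat j) * QBf k N j)"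
  proof (rule sum.cong)
    fix j assume "j \<in> {0..N}"
    hence j: "j \<le> N" by simp
    have s1: "(-1::real fps)^(N+(N-j)) = (-1)^j"
    proof -
      have e: "N + (N - j) = j + 2*(N-j)" using j by simp
      show ?thesis by (simp only: e power_add power_mult) simp
    qed
    have s2: "of_nat r * of_nat N^2 + a * of_nat N + (of_nat r * of_nat (N-j)^2 + (- 2 * of_nat r * of_nat N - a) * of_nat (N-j))
       = of_nat r * (of_nat j)^2 + a * (of_nat j :: real)"
      using j by (simp add: of_nat_diff power2_eq_square algebra_simps)
    show "(-1)^(N+(N-j)) * E (of_nat r * of_nat N^2 + a * of_nat N + (of_nat r * of_nat (N-j)^2 + (- 2 * of_nat r * of_nat N - a) * of_nat (N-j))) * QBf k N (N-j)
      = (-1)^j * E (of_nat r * of_nat j^2 + a * of_nat j) * QBf k N j"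
      by (simp only: s1 s2 QBf_sym[OF k j])
  qed simp
  finally show ?thesis unfolding Sf_def E_def[symmetric] by simp
qed



lemma coeff_shift_mult: "coeff ([:h,1:] * (P::real poly)) d = h * coeff P d + (case d of 0 \<Rightarrow> 0 | Suc d' \<Rightarrow> coeff P d')"
  by (cases d) (simp_all add: coeff_pCons)

lemma deg_shift[simp]: "degree (pcompose p [:h,1::real:]) = degree p"
  by (simp add: degree_pcompose)

lemma shift_coeff_a: "degree (p::real poly) \<le> d \<Longrightarrow> coeff (pcompose p [:h,1:]) d = coeff p d"
proof (induction p arbitrary: d rule: pCons_induct)
  case 0 thus ?case by simp
next
  case (pCons c p)
  show ?case
  proof (cases d)
    case 0
    with pCons have "p = 0" by (auto simp: degree_pCons_eq_if split: if_splits)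
    thus ?thesis using 0 by simp
  next
    case (Suc d')
    have dp: "degree p \<le> d'" using pCons.prems Suc by (auto simp: degree_pCons_eq_if split: if_splits)
    have "coeff (pcompose p [:h,1:]) (Suc d') = 0"
      by (rule coeff_eq_0) (use dp in \<open>simp add: degree_pcompose\<close>)
    thus ?thesis using Suc pCons.IH[OF dp] by (simp add: pcompose_pCons coeff_shift_mult)
  qed
qed

lemma shift_coeff_b: "degree (p::real poly) \<le> Suc d \<Longrightarrow> coeff (pcompose p [:h,1:]) d = coeff p d + of_nat (Suc d) * h * coeff p (Suc d)"
proof (induction p arbitrary: d rule: pCons_induct)
  case 0 thus ?case by simp
next
  case (pCons c p)
  have dp: "degree p \<le> d" using pCons.prems by (auto simp: degree_pCons_eq_if split: if_splits)
  show ?case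
  proof (cases d)
    case 0
    have "coeff (pcompose p [:h,1:]) 0 = coeff p 0" using dp 0 by (intro shift_coeff_a) simp
    thus ?thesis using 0 by (simp add: pcompose_pCons coeff_shift_mult)
  next
    case (Suc d')
    have a: "coeff (pcompose p [:h,1:]) (Suc d') = coeff p (Suc d')" using dp Suc by (intro shift_coeff_a) simp
    have b: "coeff (pcompose p [:h,1:]) d' = coeff p d' + of_nat (Suc d') * h * coeff p (Suc d')"
      using pCons.IH[of d'] dp Suc by simp
    show ?thesis using Suc a b by (simp add: pcompose_pCons coeff_shift_mult algebra_simps)
  qed
qed

definition PS :: "nat \<Rightarrow> nat \<Rightarrow> nat \<Rightarrow> real poly fps" where
  "PS r k N = (\<Sum>j=0..N. (-1)^j * EP [:of_nat r * of_nat j^2, of_nat j:] * CP (QBf k N j))"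

lemma ev_PS[simp]: "ev a (PS r k N) = Sf r k N a"
  unfolding PS_def Sf_def ev_sum
  by (rule sum.cong) (simp_all add: mult.commute)

lemma PS_rec: "PS r k (Suc N) = sh (2 * of_nat k) (PS r k N) - EP [:of_nat r, 1:] * sh (2 * of_nat r) (PS r k N)"
proof (rule ev_inj)
  fix a :: real
  have "Sf r k (Suc N) a = Sf r k N (2 * real k + a) - fps_binomial (real r + a) * Sf r k N (2 * real r + a)"
    by (simp add: Sf_rec add.commute)
  thus "ev a (PS r k (Suc N)) = ev a (sh (2 * of_nat k) (PS r k N) - EP [:of_nat r, 1:] * sh (2 * of_nat r) (PS r k N))"
    by simp
qed

lemma PS_sym: assumes k: "k \<ge> 1" shows "PS r k N = (-1)^N * EP [:of_nat r * of_nat N^2, of_nat N:] * rf (- 2 * of_nat r * of_nat N) (PS r k N)"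
proof (rule ev_inj)
  fix a :: real
  show "ev a (PS r k N) = ev a ((-1)^N * EP [:of_nat r * of_nat N^2, of_nat N:] * rf (- 2 * of_nat r * of_nat N) (PS r k N))"
    using Sf_sym[OF k, of r N a] by (simp add: mult.commute)
qed

lemma PS_0: "PS r k 0 = 1"
  by (rule ev_inj) (simp add: Sf_def)



definition wt :: "real poly fps \<Rightarrow> nat \<Rightarrow> bool" where
  "wt F w \<longleftrightarrow> (\<forall>i. F$i \<noteq> 0 \<longrightarrow> w + degree (F$i) \<le> 2*i)"

lemma wtD: "wt F w \<Longrightarrow> F$i \<noteq> 0 \<Longrightarrow> w + degree (F$i) \<le> 2*i"
  by (simp add: wt_def)

lemma wt_zero: "wt F w \<Longrightarrow> 2*i < w \<Longrightarrow> F$i = 0"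
  using wtD by fastforce

lemma wt_deg: "wt F w \<Longrightarrow> degree (F$i) \<le> 2*i - w"
  by (cases "F$i = 0") (auto dest: wtD[of F w i])

lemma wtI: "(\<And>i. F$i \<noteq> 0 \<Longrightarrow> w \<le> 2*i \<and> degree (F$i) \<le> 2*i - w) \<Longrightarrow> wt F w"
  unfolding wt_def by force

lemma wt_add: "wt F w \<Longrightarrow> wt G w \<Longrightarrow> wt (F + G) w"
proof (rule wtI)
  fix i assume F: "wt F w" and G: "wt G w" and nz: "(F+G)$i \<noteq> 0"
  have "F$i \<noteq> 0 \<or> G$i \<noteq> 0" using nz by auto
  hence "w \<le> 2*i" using wtD[OF F, of i] wtD[OF G, of i] by auto
  moreover have "degree ((F+G)$i) \<le> 2*i - w"
    using wt_deg[OF F, of i] wt_deg[OF G, of i] by (simp add: degree_add_le)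
  ultimately show "w \<le> 2*i \<and> degree ((F+G)$i) \<le> 2*i - w" by simp
qed

lemma wt_uminus: "wt F w \<Longrightarrow> wt (- F) w"
  by (simp add: wt_def)

lemma wt_diff: "wt F w \<Longrightarrow> wt G w \<Longrightarrow> wt (F - G) w"
  using wt_add[of F w "-G"] wt_uminus[of G w] by simp

lemma wt_mono: "wt F w \<Longrightarrow> v \<le> w \<Longrightarrow> wt F v"
  by (auto simp: wt_def dest: spec)

lemma wt_mult: assumes F: "wt F w" and G: "wt G v" shows "wt (F * G) (w + v)"
proof (rule wtI)
  fix i assume nz: "(F*G)$i \<noteq> 0"
  have eq: "(F*G)$i = (\<Sum>l=0..i. F$l * G$(i-l))" by (simp add: fps_mult_nth)
  obtain l where l: "l \<in> {0..i}" "F$l * G$(i-l) \<noteq> 0"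
    using nz unfolding eq by (meson sum.neutral)
  have "w \<le> 2*l" "v \<le> 2*(i-l)" using wtD[OF F, of l] wtD[OF G, of "i-l"] l by auto
  hence wv: "w + v \<le> 2*i" using l by auto
  have "degree ((F*G)$i) \<le> 2*i - (w+v)"
    unfolding eq
  proof (rule degree_sum_le)
    fix l assume l: "l \<in> {0..i}"
    show "degree (F$l * G$(i-l)) \<le> 2*i - (w+v)"
    proof (cases "F$l * G$(i-l) = 0")
      case True thus ?thesis by auto
    next
      case False
      hence "w + degree (F$l) \<le> 2*l" "v + degree (G$(i-l)) \<le> 2*(i-l)"
        using wtD[OF F, of l] wtD[OF G, of "i-l"] by auto
      moreover have "degree (F$l * G$(i-l)) \<le> degree (F$l) + degree (G$(i-l))" by (rule degree_mult_le)
      ultimately show ?thesis using l by auto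
    qed
  qed simp
  thus "w + v \<le> 2*i \<and> degree ((F*G)$i) \<le> 2*i - (w+v)" using wv by simp
qed

lemma wt_sh: assumes F: "wt F w" shows "wt (sh h F) w"
proof (rule wtI)
  fix i assume "sh h F $ i \<noteq> 0"
  hence "F$i \<noteq> 0" by (auto simp: sh_def)
  thus "w \<le> 2*i \<and> degree (sh h F $ i) \<le> 2*i - w" using wtD[OF F, of i] by (simp add: sh_def)
qed

lemma coeff_shdiff_top: "coeff (pcompose p [:h,1::real:] - pcompose p [:h',1:]) (degree p) = 0"
  using shift_coeff_a[of p "degree p" h] shift_coeff_a[of p "degree p" h'] by simp

lemma wt_shdiff: assumes F: "wt F w" shows "wt (sh h F - sh h' F) (Suc w)"
proof (rule wtI)
  fix i
  define p where "p = F$i"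
  define D where "D = pcompose p [:h,1::real:] - pcompose p [:h',1:]"
  assume nz: "(sh h F - sh h' F)$i \<noteq> 0"
  hence Dnz: "D \<noteq> 0" by (simp add: D_def p_def sh_def)
  hence pnz: "p \<noteq> 0" by (auto simp: D_def)
  have dD: "degree D \<le> degree p" unfolding D_def
    by (metis deg_shift degree_diff_le order_refl)
  have "degree D \<noteq> degree p"
  proof
    assume "degree D = degree p"
    hence "coeff D (degree D) = 0" using coeff_shdiff_top[of p h h'] by (simp add: D_def)
    thus False using Dnz by simp
  qed
  hence "degree D < degree p" using dD by simp
  moreover have "w + degree p \<le> 2*i" using wtD[OF F, of i] pnz by (simp add: p_def)
  ultimately show "Suc w \<le> 2*i \<and> degree ((sh h F - sh h' F)$i) \<le> 2*i - Suc w"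
    by (simp add: D_def p_def sh_def)
qed

definition tp :: "nat \<Rightarrow> real poly fps \<Rightarrow> real fps" where
  "tp w F = Abs_fps (\<lambda>i. coeff (F$i) (2*i - w))"

lemma tp_nth: "tp w F $ i = coeff (F$i) (2*i - w)" by (simp add: tp_def)
lemma tp_add: "tp w (F + G) = tp w F + tp w G" by (simp add: fps_eq_iff tp_nth)
lemma tp_diff: "tp w (F - G) = tp w F - tp w G" by (simp add: fps_eq_iff tp_nth)

lemma coeff_mult_bound:
  fixes p q :: "real poly"
  assumes "degree p \<le> m" "degree q \<le> n"
  shows "coeff (p*q) (m+n) = coeff p m * coeff q n"
proof (cases "degree p = m \<and> degree q = n")
  case True thus ?thesis using coeff_mult_degree_sum[of p q] by simp
next
  case False
  hence "degree p < m \<or> degree q < n" using assms by auto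
  moreover have "degree (p*q) < m + n" if "degree p < m \<or> degree q < n"
    using degree_mult_le[of p q] that assms by linarith
  ultimately show ?thesis by (auto simp: coeff_eq_0)
qed

lemma tp_mult: assumes F: "wt F w" and G: "wt G v" shows "tp (w+v) (F*G) = tp w F * tp v G"
proof (rule fps_ext)
  fix i
  have "tp (w+v) (F*G) $ i = (\<Sum>l=0..i. coeff (F$l * G$(i-l)) (2*i - (w+v)))"
    by (simp add: tp_nth fps_mult_nth coeff_sum)
  also have "\<dots> = (\<Sum>l=0..i. coeff (F$l) (2*l - w) * coeff (G$(i-l)) (2*(i-l) - v))"
  proof (rule sum.cong)
    fix l assume l: "l \<in> {0..i}"
    show "coeff (F$l * G$(i-l)) (2*i - (w+v)) = coeff (F$l) (2*l - w) * coeff (G$(i-l)) (2*(i-l) - v)"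
    proof (cases "F$l = 0 \<or> G$(i-l) = 0")
      case True thus ?thesis by auto
    next
      case False
      hence a: "w + degree (F$l) \<le> 2*l" "v + degree (G$(i-l)) \<le> 2*(i-l)"
        using wtD[OF F, of l] wtD[OF G, of "i-l"] by auto
      have e: "2*i - (w+v) = (2*l - w) + (2*(i-l) - v)" using a l by auto
      show ?thesis unfolding e by (rule coeff_mult_bound) (use a in auto)
    qed
  qed simp
  also have "\<dots> = (tp w F * tp v G) $ i" by (simp add: fps_mult_nth tp_nth)
  finally show "tp (w+v) (F*G) $ i = (tp w F * tp v G) $ i" .
qed

lemma tp_sh: assumes F: "wt F w" shows "tp w (sh h F) = tp w F"
proof (rule fps_ext)
  fix i
  show "tp w (sh h F) $ i = tp w F $ i"
    using wt_deg[OF F, of i] by (simp add: tp_nth sh_def shift_coeff_a)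
qed

lemma tp_shdiff: assumes F: "wt F w"
  shows "tp (Suc w) (sh h F - sh h' F) $ i = (h - h') * of_nat (2*i - w) * (tp w F $ i)"
proof (cases "F$i = 0")
  case True thus ?thesis by (simp add: tp_nth sh_def)
next
  case False
  hence a: "w + degree (F$i) \<le> 2*i" using wtD[OF F] by auto
  show ?thesis
  proof (cases "2*i = w")
    case True
    hence "degree (F$i) = 0" using a by simp
    then obtain c where "F$i = [:c:]" by (metis degree_eq_zeroE)
    thus ?thesis using True by (simp add: tp_nth sh_def)
  next
    case False
    then obtain d where d: "2*i - w = Suc d" using a by (metis Suc_diff_Suc add_leD1 le_neq_implies_less)
    have e: "2*i - Suc w = d" using d by simp
    have dg: "degree (F$i) \<le> Suc d" using a d by simp
    have "tp (Suc w) (sh h F - sh h' F) $ i = coeff (pcompose (F$i) [:h,1:]) d - coeff (pcompose (F$i) [:h',1:]) d"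
      by (simp only: tp_nth sh_def fps_nth_Abs_fps fps_sub_nth coeff_diff e)
    also have "\<dots> = (h - h') * of_nat (Suc d) * coeff (F$i) (Suc d)"
    proof -
      have c1: "coeff (pcompose (F$i) [:h,1:]) d = coeff (F$i) d + of_nat (Suc d) * h * coeff (F$i) (Suc d)"
        by (rule shift_coeff_b[OF dg])
      have c2: "coeff (pcompose (F$i) [:h',1:]) d = coeff (F$i) d + of_nat (Suc d) * h' * coeff (F$i) (Suc d)"
        by (rule shift_coeff_b[OF dg])
      show ?thesis by (simp only: c1 c2) (simp add: left_diff_distrib)
    qed
    also have "\<dots> = (h - h') * of_nat (2*i - w) * (tp w F $ i)"
      by (simp only: tp_nth d)
    finally show ?thesis .
  qed
qed

lemma EP_0: "EP p $ 0 = 1" by (simp add: EP_nth)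

lemma EP_1: "EP p $ Suc 0 = p" by (simp add: EP_nth)

lemma deg_EP: assumes "degree p \<le> 1" shows "degree (EP p $ l) \<le> l"
proof -
  have "degree (EP p $ l) \<le> degree (\<Prod>s<l. p - [:of_nat s:])" by (simp add: EP_nth degree_smult_le)
  also have "\<dots> \<le> (\<Sum>s<l. degree (p - [:of_nat s:]))" using degree_prod_sum_le[of "{..<l}" "\<lambda>s. p - [:of_nat s:]"] by (simp add: o_def)
  also have "\<dots> \<le> (\<Sum>s<l. 1)"
    by (rule sum_mono) (use assms in \<open>simp add: degree_diff_le\<close>)
  finally show ?thesis by simp
qed

lemma wt_1mEP: "wt (1 - EP [:c,1:]) 1"
proof (rule wtI)
  fix i assume nz: "(1 - EP [:c,1:]) $ i \<noteq> 0"
  hence i: "i \<noteq> 0" by (cases "i = 0") (auto simp: EP_0)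
  have "degree ((1 - EP [:c,1:]) $ i) = degree (EP [:c,1:] $ i)" using i by simp
  also have "\<dots> \<le> i" by (rule deg_EP) simp
  finally show "1 \<le> 2*i \<and> degree ((1 - EP [:c,1:]) $ i) \<le> 2*i - 1" using i by simp
qed

lemma tp_1mEP: "tp 1 (1 - EP [:c,1:]) = - fps_X"
proof (rule fps_ext)
  fix i
  show "tp 1 (1 - EP [:c,1:]) $ i = (- fps_X) $ i"
  proof (cases "i \<le> 1")
    case True
    hence "i = 0 \<or> i = 1" by auto
    thus ?thesis by (auto simp: tp_nth EP_0 EP_1)
  next
    case False
    have "degree (EP [:c,1:] $ i) < 2*i - 1" using deg_EP[of "[:c,1:]" i] False by simp
    hence "coeff (EP [:c,1:] $ i) (2*i - 1) = 0" by (rule coeff_eq_0)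
    thus ?thesis using False by (simp add: tp_nth)
  qed
qed



definition cf :: "real \<Rightarrow> nat \<Rightarrow> nat \<Rightarrow> real" where
  "cf h N i = (if N \<le> 2*i \<and> i \<le> N then (-1)^i * h^(N-i) * fact N / (fact (2*i-N) * fact (N-i)) else 0)"

lemma cf_0: "cf h 0 i = (if i = 0 then 1 else 0)"
  by (simp add: cf_def)

lemma cf_rec: "cf h (Suc N) i = 2*h * of_nat (2*i - N) * cf h N i - (if i = 0 then 0 else cf h N (i-1))"
proof (cases i)
  case 0 thus ?thesis by (simp add: cf_def)
next
  case (Suc i')
  consider "Suc N < i" | "2*i \<le> N" | "i = Suc N" | "Suc N \<le> 2*i \<and> i \<le> N \<and> 2*i = Suc N" | "Suc N < 2*i \<and> i \<le> N"
    by linarith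
  thus ?thesis
  proof cases
    case 1 thus ?thesis using Suc by (simp add: cf_def)
  next
    case 2
    hence "of_nat (2*i - N) * cf h N i = 0" by (auto simp: cf_def)
    thus ?thesis using 2 Suc by (simp add: cf_def)
  next
    case 3 thus ?thesis using Suc by (simp add: cf_def)
  next
    case 4
    hence "\<exists>m. N = 2*m + 1 \<and> i = Suc m" by presburger
    then obtain m where m: "N = 2*m + 1" "i = Suc m" by blast
    have c1: "cf h N i = (-1)^(Suc m) * h^m * fact (Suc (2*m)) / fact m" using m by (simp add: cf_def)
    have c2: "cf h N (i-1) = 0" using m by (simp add: cf_def)
    have c3: "cf h (Suc N) i = (-1)^(Suc m) * h^(Suc m) * fact (Suc (Suc (2*m))) / fact (Suc m)" using m by (simp add: cf_def)
    have f1: "fact (Suc (Suc (2*m))) = (2 * of_nat m + 2) * (fact (Suc (2*m)) :: real)"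
      by (simp add: fact_Suc[of "Suc (2*m)"] algebra_simps)
    have f2: "fact (Suc m) = (of_nat m + 1) * (fact m :: real)"
      by (simp add: fact_Suc[of m] algebra_simps)
    have e: "2*i - N = 1" using m by simp
    have alg: "\<And>x F G::real. x \<ge> 0 \<Longrightarrow> G > 0 \<Longrightarrow>
       2*h*1*((-1)^Suc m * h^m * F / G) - 0 = (-1)^Suc m * h^Suc m * ((2*x+2)*F) / ((x+1)*G)"
    proof -
      fix x F G :: real assume x: "x \<ge> 0" and G: "G > 0"
      have "(x+1)*G \<noteq> 0" "G \<noteq> 0" "x + 1 \<noteq> 0" using x G by simp_all
      hence "(-1)^Suc m * h^Suc m * ((2*x+2)*F) / ((x+1)*G) = (-1)^Suc m * h^Suc m * (2*F) / G"
        by (simp add: field_simps)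
      thus "2*h*1*((-1)^Suc m * h^m * F / G) - 0 = (-1)^Suc m * h^Suc m * ((2*x+2)*F) / ((x+1)*G)"
        by simp
    qed
    have i0: "(i = 0) = False" using Suc by simp
    have a2: "2*h*1*((-1)^Suc m * h^m * fact (Suc (2*m)) / fact m) - 0 = (-1)^Suc m * h^Suc m * ((2*real m+2)*fact (Suc (2*m))) / ((real m+1)*fact m)"
      by (rule alg) simp_all
    show ?thesis by (simp only: c1 c2 c3 e f1 f2 of_nat_1 i0 if_False a2)
  next
    case 5
    hence "\<exists>s m. N = s + 2*m + 2 \<and> i = s + m + 2" by presburger
    then obtain s m where sm: "N = s + 2*m + 2" "i = s + m + 2" by blast
    have fs2: "fact (s+2) = (real s + 2) * ((real s + 1) * fact s)"
      by (simp add: fact_Suc algebra_simps)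
    have fs1: "fact (s+1) = (real s + 1) * fact s"
      by (simp add: fact_Suc algebra_simps)
    have fm1: "fact (m+1) = (real m + 1) * fact m"
      by (simp add: fact_Suc algebra_simps)
    have fN: "fact (Suc N) = (real s + 2 * real m + 3) * fact N"
      using sm by (simp add: fact_Suc[of N] algebra_simps)
    have p1: "(-1::real)^i = (-1)^(s+m)" using sm by (simp add: power_add)
    have p2: "(-1::real)^(i-1) = - ((-1)^(s+m))" using sm by (simp add: power_add)
    have c1: "cf h N i = (-1)^(s+m) * h^m * fact N / (((real s+2)*((real s+1)*fact s)) * fact m)"
    proof -
      have "cf h N i = (-1)^i * h^(N-i) * fact N / (fact (2*i-N) * fact (N-i))" using 5 by (simp add: cf_def)
      also have "2*i - N = s + 2" using sm by simp
      also have "N - i = m" using sm by simp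
      finally show ?thesis by (simp only: p1 fs2)
    qed
    have c2: "cf h N (i-1) = - ((-1)^(s+m) * h^(Suc m) * fact N / (fact s * ((real m+1)*fact m)))"
    proof -
      have "cf h N (i-1) = (-1)^(i-1) * h^(N-(i-1)) * fact N / (fact (2*(i-1)-N) * fact (N-(i-1)))" using sm by (simp add: cf_def)
      also have "2*(i-1) - N = s" using sm by simp
      also have "N - (i-1) = m + 1" using sm by simp
      finally show ?thesis by (simp only: p2 fm1) simp
    qed
    have c3: "cf h (Suc N) i = (-1)^(s+m) * h^(Suc m) * ((real s + 2 * real m + 3) * fact N) / (((real s+1)*fact s) * ((real m+1)*fact m))"
    proof -
      have "cf h (Suc N) i = (-1)^i * h^(Suc N-i) * fact (Suc N) / (fact (2*i-Suc N) * fact (Suc N-i))" using 5 by (simp add: cf_def)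
      also have "2*i - Suc N = s + 1" using sm by simp
      also have "Suc N - i = m + 1" using sm by simp
      finally show ?thesis by (simp only: p1 fs1 fm1 fN) simp
    qed
    have e: "real (2*i - N) = real s + 2" using sm by simp
    have i0: "(i = 0) = False" using Suc by simp
    have alg: "2*h*(x+2) * (A * h^m * F / (((x+2)*((x+1)*S)) * M)) - (- (A * h^(Suc m) * F / (S * ((y+1)*M))))
       = A * h^(Suc m) * ((x + 2*y + 3) * F) / (((x+1)*S) * ((y+1)*M))"
      if "x \<ge> 0" "y \<ge> 0" "S > 0" "M > 0" for x y S M A F :: real
    proof -
      have nz: "S \<noteq> 0" "M \<noteq> 0" "x + 1 \<noteq> 0" "x + 2 \<noteq> 0" "y + 1 \<noteq> 0" using that by auto
      define D where "D = ((x+1)*S) * ((y+1)*M)"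
      have t1: "2*h*(x+2) * (A * h^m * F / (((x+2)*((x+1)*S)) * M)) = (A * h^(Suc m) * F * (2*(y+1))) / D"
        unfolding D_def using nz by (simp add: divide_simps; simp add: algebra_simps)
      have t2: "A * h^(Suc m) * F / (S * ((y+1)*M)) = (A * h^(Suc m) * F * (x+1)) / D"
        unfolding D_def using nz by (simp add: divide_simps; simp add: algebra_simps)
      have t3: "A * h^(Suc m) * ((x + 2*y + 3) * F) / (((x+1)*S) * ((y+1)*M)) = (A * h^(Suc m) * F * (2*(y+1)) + A * h^(Suc m) * F * (x+1)) / D"
        unfolding D_def by (simp add: algebra_simps)
      show ?thesis unfolding t1 t2 t3 by (simp add: add_divide_distrib)
    qed
    have alg': "A * h^(Suc m) * ((x + 2*y + 3) * F) / (((x+1)*S) * ((y+1)*M)) = 2*h*(x+2) * (A * h^m * F / (((x+2)*((x+1)*S)) * M)) - (- (A * h^(Suc m) * F / (S * ((y+1)*M))))"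
      if "x \<ge> 0" "y \<ge> 0" "S > 0" "M > 0" for x y S M A F :: real
    proof -
      show ?thesis using alg[OF that] by simp
    qed
    show ?thesis
      by (simp only: c1 c2 c3 e i0 if_False) (rule alg', simp_all)
  qed
qed



lemma wt_one: "wt 1 0"
  by (rule wtI) (auto split: if_splits)

lemma PS_split: "PS r k (Suc N) = (sh (2 * of_nat k) (PS r k N) - sh (2 * of_nat r) (PS r k N))
   + (1 - EP [:of_nat r, 1:]) * sh (2 * of_nat r) (PS r k N)"
  by (simp add: PS_rec algebra_simps)

lemma wt_PS: "wt (PS r k N) N"
proof (induction N)
  case 0 thus ?case by (simp add: PS_0 wt_one)
next
  case (Suc N)
  have a: "wt (sh (2 * of_nat k) (PS r k N) - sh (2 * of_nat r) (PS r k N)) (Suc N)"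
    by (rule wt_shdiff[OF Suc.IH])
  have b: "wt ((1 - EP [:of_nat r, 1:]) * sh (2 * of_nat r) (PS r k N)) (1 + N)"
    by (rule wt_mult[OF wt_1mEP wt_sh[OF Suc.IH]])
  show ?case unfolding PS_split using wt_add[OF a] b by simp
qed

lemma tp_PS_rec: "tp (Suc N) (PS r k (Suc N)) $ i
   = 2 * (real k - real r) * of_nat (2*i - N) * (tp N (PS r k N) $ i) - (if i = 0 then 0 else tp N (PS r k N) $ (i-1))"
proof -
  have b: "tp (1 + N) ((1 - EP [:of_nat r, 1:]) * sh (2 * of_nat r) (PS r k N)) = - fps_X * tp N (PS r k N)"
  proof -
    have "tp (1+N) ((1 - EP [:of_nat r,1:]) * sh (2 * of_nat r) (PS r k N)) = tp 1 (1 - EP [:of_nat r, 1:]) * tp N (sh (2*of_nat r) (PS r k N))"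
      by (rule tp_mult[OF wt_1mEP wt_sh[OF wt_PS]])
    thus ?thesis by (simp only: tp_1mEP tp_sh[OF wt_PS] mult_minus_left)
  qed
  have "tp (Suc N) (PS r k (Suc N)) = tp (Suc N) (sh (2 * of_nat k) (PS r k N) - sh (2 * of_nat r) (PS r k N))
      + tp (1 + N) ((1 - EP [:of_nat r, 1:]) * sh (2 * of_nat r) (PS r k N))"
    unfolding PS_split tp_add by simp
  also have "\<dots> = tp (Suc N) (sh (2 * of_nat k) (PS r k N) - sh (2 * of_nat r) (PS r k N)) - fps_X * tp N (PS r k N)"
    unfolding b by simp
  finally have "tp (Suc N) (PS r k (Suc N)) $ i = tp (Suc N) (sh (2 * of_nat k) (PS r k N) - sh (2 * of_nat r) (PS r k N)) $ i - (fps_X * tp N (PS r k N)) $ i"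
    by simp
  also have "\<dots> = (2 * of_nat k - 2 * of_nat r) * of_nat (2*i - N) * (tp N (PS r k N) $ i) - (if i = 0 then 0 else tp N (PS r k N) $ (i-1))"
    by (simp only: tp_shdiff[OF wt_PS] fps_X_mult_nth)
  finally show ?thesis by (simp add: algebra_simps)
qed

lemma tp_PS: "tp N (PS r k N) $ i = cf (real k - real r) N i"
proof (induction N arbitrary: i)
  case 0 thus ?case by (simp add: PS_0 tp_nth cf_0)
next
  case (Suc N)
  show ?case by (simp add: tp_PS_rec Suc.IH cf_rec algebra_simps)
qed

lemma Sf_nth: "Sf r k N a $ i = poly (PS r k N $ i) a"
  by (metis ev_PS ev_nth)

lemma Sf_low: "2*i < N \<Longrightarrow> Sf r k N a $ i = 0"
  by (simp add: Sf_nth wt_zero[OF wt_PS])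

lemma Sf_even: "Sf r k (2*n) a $ n = cf (real k - real r) (2*n) n"
proof -
  have "degree (PS r k (2*n) $ n) = 0" using wt_deg[OF wt_PS, of r k "2*n" n] by simp
  then obtain c where c: "PS r k (2*n) $ n = [:c:]" by (metis degree_eq_zeroE)
  have "tp (2*n) (PS r k (2*n)) $ n = c" by (simp add: tp_nth c)
  thus ?thesis using tp_PS[of "2*n" r k n] by (simp add: Sf_nth c)
qed

lemma poly_lin: "degree (P::real poly) \<le> 1 \<Longrightarrow> poly P x = coeff P 0 + coeff P 1 * x"
proof -
  assume d: "degree P \<le> 1"
  have "P = [:coeff P 0, coeff P 1:]"
  proof (rule poly_eqI)
    fix i show "coeff P i = coeff [:coeff P 0, coeff P 1:] i"
      using d by (cases i; cases "i - 1") (auto simp: coeff_eq_0)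
  qed
  hence "poly P x = poly [:coeff P 0, coeff P 1:] x" by simp
  thus ?thesis by simp
qed

lemma Sf_odd:
  assumes k: "k \<ge> 1"
  shows "Sf r k (2*n+1) a $ (n+1) = cf (real k - real r) (2*n+1) (n+1) * (real r * real (2*n+1) + a)"
proof -
  define N where "N = 2*n+1"
  define P where "P = PS r k N $ (n+1)"
  define c where "c = - 2 * real r * real N"
  have dP: "degree P \<le> 1" using wt_deg[OF wt_PS, of r k N "n+1"] by (simp add: P_def N_def)
  have beta: "coeff P 1 = cf (real k - real r) N (n+1)"
    using tp_PS[of N r k "n+1"] by (simp add: tp_nth P_def N_def)
  have symm: "P = - pcompose P [:c,-1:]"
  proof -
    have "PS r k N = (-1)^N * EP [:of_nat r * of_nat N^2, of_nat N:] * rf c (PS r k N)"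
      using PS_sym[OF k, of r N] by (simp add: c_def)
    also have "(-1::real poly fps)^N = -1" by (simp add: N_def)
    finally have e: "PS r k N = - (EP [:of_nat r * of_nat N^2, of_nat N:] * rf c (PS r k N))" by simp
    have "P = - (\<Sum>l=0..Suc n. EP [:of_nat r * of_nat N^2, of_nat N:] $ l * rf c (PS r k N) $ (Suc n - l))"
      unfolding P_def by (subst e) (simp add: fps_mult_nth)
    also have "(\<Sum>l=0..Suc n. EP [:of_nat r * of_nat N^2, of_nat N:] $ l * rf c (PS r k N) $ (Suc n - l))
        = rf c (PS r k N) $ Suc n"
    proof -
      have z: "rf c (PS r k N) $ (n - l) = 0" for l
        using wt_zero[OF wt_PS, of "n - l" N r k] by (simp add: rf_def N_def)
      show ?thesis by (subst sum.atLeast0_atMost_Suc_shift) (simp add: EP_0 z)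
    qed
    finally show ?thesis by (simp add: rf_def P_def)
  qed
  have "poly P 0 = - poly P c"
    using arg_cong[OF symm, of "\<lambda>p. poly p 0"] by (simp add: poly_pcompose)
  hence alpha: "coeff P 0 = - (coeff P 1 * c) / 2"
    using poly_lin[OF dP, of 0] poly_lin[OF dP, of c] by simp
  have "Sf r k N a $ (n+1) = poly P a" by (simp add: Sf_nth P_def)
  also have "\<dots> = coeff P 1 * (real r * real N + a)"
    using poly_lin[OF dP, of a] alpha by (simp add: c_def algebra_simps)
  also have "\<dots> = cf (real k - real r) N (n+1) * (real r * real N + a)" by (simp only: beta)
  finally show ?thesis unfolding N_def .
qed



fun QBp :: "nat \<Rightarrow> nat \<Rightarrow> nat \<Rightarrow> real poly" where
  "QBp k 0 j = (if j = 0 then 1 else 0)"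
| "QBp k (Suc N) 0 = 1"
| "QBp k (Suc N) (Suc j) = QBp k N j + [:1,1:]^(2*k*Suc j) * QBp k N (Suc j)"

lemma fps_of_poly_11: "fps_of_poly [:1,1::real:] = 1 + fps_X"
proof -
  have "[:1,1::real:] = 1 + [:0,1:]" by (simp add: one_pCons)
  thus ?thesis by (simp add: fps_of_poly_add)
qed

lemma fps_of_poly_11_pow: "fps_of_poly ([:1,1::real:]^n) = fps_binomial (of_nat n)"
  by (simp add: fps_of_poly_power fps_of_poly_11 fps_binomial_of_nat)

lemma fps_QBp: "fps_of_poly (QBp k N j) = QBf k N j"
proof (induction N arbitrary: j)
  case 0 thus ?case by simp
next
  case (Suc N) thus ?case
    by (cases j) (simp_all add: fps_of_poly_add fps_of_poly_mult fps_of_poly_11_pow del: of_nat_mult)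
qed

lemma QBp_gt: "N < j \<Longrightarrow> QBp k N j = 0"
  using fps_QBp[of k N j] QBf_gt[of N j k] by (metis fps_of_poly_0 fps_of_poly_eq_iff)

lemma QBp_diag: "QBp k N N = 1"
  using fps_QBp[of k N N] by (metis QBf_diag fps_of_poly_1 fps_of_poly_eq_iff)

definition Spoly :: "nat \<Rightarrow> nat \<Rightarrow> nat \<Rightarrow> nat \<Rightarrow> real poly" where
  "Spoly r m k N = (\<Sum>j=0..N. (-1)^j * [:1,1:]^(r*j^2 + m*j) * QBp k N j)"

lemma fps_of_poly_m1: "fps_of_poly ((-1::real poly)^j) = (-1)^j"
  by (simp add: fps_of_poly_power fps_of_poly_uminus)

lemma coeff_Spoly: "coeff (Spoly r m k N) i = Sf r k N (real m) $ i"
proof -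
  have "fps_of_poly (Spoly r m k N) = Sf r k N (real m)"
    unfolding Spoly_def Sf_def fps_of_poly_sum
  proof (rule sum.cong)
    fix j
    have e: "real r * real j ^ 2 + real m * real j = of_nat (r*j^2 + m*j)" by simp
    show "fps_of_poly ((-1)^j * [:1,1:]^(r*j^2 + m*j) * QBp k N j) = (-1)^j * fps_binomial (of_nat r * of_nat j^2 + real m * of_nat j) * QBf k N j"
      by (simp only: e fps_of_poly_mult fps_of_poly_11_pow fps_QBp fps_of_poly_m1)
  qed simp
  hence "fps_of_poly (Spoly r m k N) $ i = Sf r k N (real m) $ i" by simp
  thus ?thesis by simp
qed

lemma qpoch_0: "qpoch x q 0 = 1" by (simp add: qpoch_def)

lemma alg_pascal: fixes QN D1 D2 a b s :: real
  assumes "D1 \<noteq> 0" "D2 \<noteq> 0" "a \<noteq> 0" "b \<noteq> 0"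
  shows "QN * (a + s*b) / (D1 * a * (D2 * b)) = QN / (D1 * (D2 * b)) + s * (QN / (D1 * a * D2))"
  using assms by (simp add: field_simps)

lemma qpoch_Suc: "qpoch x q (Suc n) = qpoch x q n * (1 - q^n * x)"
  by (simp add: qpoch_def)

lemma qpoch_nz: assumes p: "p > 0" "p \<noteq> 1" shows "qpoch p p n \<noteq> 0"
proof -
  have "1 - p^j * p \<noteq> 0" for j
  proof
    assume "1 - p^j * p = 0"
    hence "p^(Suc j) = 1" by (simp add: mult.commute)
    hence "p = 1" using p by (metis Suc_neq_Zero abs_of_pos power_eq_1_iff real_norm_def)
    thus False using p by simp
  qed
  thus ?thesis by (simp add: qpoch_def)
qed

lemma gb_0: "gauss_binom p N 0 = 1 \<or> qpoch p p N = 0"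
  by (simp add: gauss_binom_def qpoch_def)

lemma gb_pascal:
  assumes p: "p > 0" "p \<noteq> 1" and j: "Suc j \<le> N"
  shows "gauss_binom p (Suc N) (Suc j) = gauss_binom p N j + p^(Suc j) * gauss_binom p N (Suc j)"
proof -
  define Q where "Q = qpoch p p"
  have Qnz: "\<And>n. Q n \<noteq> 0" using qpoch_nz[OF p] by (simp add: Q_def)
  have QS: "\<And>n. Q (Suc n) = Q n * (1 - p^(Suc n))" by (simp add: Q_def qpoch_Suc mult.commute)
  have NS: "N - j = Suc (N - Suc j)" using j by simp
  have f1: "1 - p^(Suc j) \<noteq> 0" using Qnz[of "Suc j"] by (simp add: QS)
  have f2: "1 - p^(N - j) \<noteq> 0" using Qnz[of "N - j"] NS by (simp add: QS)
  have pp: "p^(Suc j) * p^(N - j) = p^(Suc N)" using j by (simp add: power_add[symmetric])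
  have key: "1 - p^(Suc N) = (1 - p^(Suc j)) + p^(Suc j) * (1 - p^(N - j))"
    using pp by (simp add: algebra_simps)
  have "gauss_binom p (Suc N) (Suc j) = Q N * (1 - p^(Suc N)) / (Q j * (1 - p^(Suc j)) * (Q (N - Suc j) * (1 - p^(N - j))))"
    by (simp add: gauss_binom_def Q_def[symmetric] QS NS)
  also have "\<dots> = Q N / (Q j * (Q (N - Suc j) * (1 - p^(N - j)))) + p^(Suc j) * (Q N / (Q j * (1 - p^(Suc j)) * Q (N - Suc j)))"
    unfolding key by (rule alg_pascal) (use Qnz f1 f2 in auto)
  also have "\<dots> = gauss_binom p N j + p^(Suc j) * gauss_binom p N (Suc j)"
    by (simp add: gauss_binom_def Q_def[symmetric] QS NS)
  finally show ?thesis .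
qed

lemma poly_QBp:
  assumes p: "p = (1+t)^(2*k)" "p > 0" "p \<noteq> 1" and j: "j \<le> N"
  shows "poly (QBp k N j) t = gauss_binom p N j"
  using j
proof (induction N arbitrary: j)
  case 0 thus ?case by (simp add: gauss_binom_def qpoch_0)
next
  case (Suc N)
  have Qnz: "\<And>n. qpoch p p n \<noteq> 0" using qpoch_nz[OF p(2,3)] .
  show ?case
  proof (cases j)
    case 0 thus ?thesis using Qnz[of "Suc N"] by (simp add: gauss_binom_def qpoch_0)
  next
    case (Suc i)
    have pw: "poly ([:1,1:]^(2*k*Suc i)) t = p^(Suc i)"
    proof -
      have "poly ([:1,1:]^(2*k*Suc i)) t = (1+t)^(2*k*Suc i)" by (simp add: add.commute)
      also have "\<dots> = ((1+t)^(2*k))^(Suc i)" by (rule power_mult)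
      finally show ?thesis by (simp only: p(1))
    qed
    show ?thesis
    proof (cases "i = N")
      case True
      thus ?thesis using Suc Qnz[of "Suc N"] by (simp add: QBp_diag QBp_gt gauss_binom_def qpoch_0)
    next
      case False
      hence iN: "Suc i \<le> N" using Suc.prems Suc by simp
      show ?thesis using Suc.IH[of i] Suc.IH[of "Suc i"] iN Suc pw
        by (simp add: gb_pascal[OF p(2,3) iN])
    qed
  qed
qed



definition gg :: "nat \<Rightarrow> real \<Rightarrow> real" where
  "gg s t = (if odd s then - (\<Sum>i<s. (1+t)^i) else 1 + (1+t)^s)"

lemma gg_eq: "1 + (-(1+t))^s = (if odd s then t else 1) * gg s t"
proof (cases "odd s")
  case True
  have "(1+t)^s - 1^s = ((1+t) - 1) * (\<Sum>i<s. 1^(s - Suc i) * (1+t)^i)" by (rule power_diff_sumr2)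
  hence "(1+t)^s - 1 = t * (\<Sum>i<s. (1+t)^i)" by simp
  moreover have "(-(1+t))^s = - ((1+t)^s)" by (rule power_minus_odd[OF True])
  ultimately show ?thesis using True by (simp add: gg_def algebra_simps)
next
  case False
  hence e: "even s" by simp
  have "(-(1+t))^s = (1+t)^s" by (rule power_minus_even[OF e])
  thus ?thesis using False by (simp add: gg_def)
qed

lemma isCont_gg: "isCont (gg s) x"
proof (cases "odd s")
  case True
  hence "gg s = (\<lambda>t. - (\<Sum>i<s. (1+t)^i))" by (simp add: gg_def fun_eq_iff)
  thus ?thesis by (simp add: continuous_intros)
next
  case False
  hence "gg s = (\<lambda>t. 1 + (1+t)^s)" by (simp add: gg_def fun_eq_iff)
  thus ?thesis by (simp add: continuous_intros)
qed

definition Bf :: "nat \<Rightarrow> real \<Rightarrow> real" where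
  "Bf N t = (\<Prod>j<N. gg (Suc j) t)"

lemma isCont_Bf: "isCont (Bf N) x"
  unfolding Bf_def by (intro continuous_intros isCont_gg)

lemma gg_0: "gg s 0 = (if odd s then - real s else 2)"
  by (simp add: gg_def)

lemma Bf_even: "Bf (2*n) 0 = (-1)^n * fact (2*n) / fact n"
proof (induction n)
  case 0 thus ?case by (simp add: Bf_def)
next
  case (Suc n)
  have e: "2 * Suc n = Suc (Suc (2*n))" by simp
  have "Bf (2 * Suc n) 0 = Bf (2*n) 0 * gg (Suc (2*n)) 0 * gg (Suc (Suc (2*n))) 0"
    unfolding e by (simp add: Bf_def)
  also have "\<dots> = (-1)^n * fact (2*n) / fact n * (- (2 * real n + 1)) * 2"
    by (simp add: Suc.IH gg_0)
  also have "\<dots> = (-1)^Suc n * ((2 * real n + 2) * ((2 * real n + 1) * fact (2*n))) / ((real n + 1) * fact n)"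
  proof -
    have nz: "fact n \<noteq> (0::real)" "real n + 1 \<noteq> 0" by simp_all
    show ?thesis using nz by (simp add: divide_simps; simp add: algebra_simps)
  qed
  also have "\<dots> = (-1)^Suc n * fact (2 * Suc n) / fact (Suc n)"
    unfolding e by (simp add: fact_Suc algebra_simps)
  finally show ?case .
qed

lemma Bf_odd: "Bf (2*n+1) 0 = (-1)^Suc n * fact (2*n+1) / fact n"
proof -
  have "Bf (2*n+1) 0 = Bf (2*n) 0 * gg (Suc (2*n)) 0" by (simp add: Bf_def)
  also have "\<dots> = (-1)^n * fact (2*n) / fact n * (- (2 * real n + 1))" by (simp add: Bf_even gg_0)
  also have "\<dots> = (-1)^Suc n * fact (2*n+1) / fact n" by (simp add: fact_Suc field_simps)
  finally show ?thesis .
qed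

lemma prod_t_even: "(\<Prod>j<2*n. if odd (Suc j) then t else 1) = (t::real)^n"
  by (induction n) (simp_all add: lessThan_Suc mult_2 power_Suc mult.commute)

lemma prod_t_odd: "(\<Prod>j<Suc (2*n). if odd (Suc j) then t else 1) = (t::real)^Suc n"
  using prod_t_even[where n=n and t=t] by (simp add: lessThan_Suc mult.commute)

lemma den_eq:
  assumes c: "(\<Prod>j<N. if odd (Suc j) then t else 1) = (t::real)^c"
  shows "qpoch (-(-(1+t))) (-(1+t)) N = t^c * Bf N t"
proof -
  have "qpoch (-(-(1+t))) (-(1+t)) N = (\<Prod>j<N. 1 + (-(1+t))^(Suc j))"
    unfolding qpoch_def by (rule prod.cong) (simp_all add: algebra_simps)
  also have "\<dots> = (\<Prod>j<N. (if odd (Suc j) then t else 1) * gg (Suc j) t)"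
    by (rule prod.cong) (simp_all only: gg_eq)
  also have "\<dots> = t^c * Bf N t" by (simp only: prod.distrib c Bf_def)
  finally show ?thesis .
qed

lemma parity_exp: assumes "odd (r + m)" shows "(-1::real)^(r*j^2 + m*j) = (-1)^j"
proof -
  have "even (r*j^2 + m*j) \<longleftrightarrow> even j" using assms by (auto simp: even_add even_mult_iff)
  thus ?thesis by (simp add: minus_one_power_iff)
qed

lemma num_eq:
  assumes rm: "odd (r + m)" and k: "k \<ge> 1" and t: "t > -1" "t \<noteq> 0"
  shows "(\<Sum>j=0..N. (-(1+t))^(r*j^2 + m*j) * gauss_binom ((-(1+t))^(2*k)) N j) = poly (Spoly r m k N) t"
proof -
  define p where "p = (1+t)^(2*k)"
  have pp: "p > 0" using t by (simp add: p_def)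
  have p1: "p \<noteq> 1"
  proof
    assume "p = 1"
    hence "(1+t)^(2*k) = 1" by (simp add: p_def)
    hence "norm (1+t) = 1 \<or> 2*k = 0" by (rule power_eq_1_iff)
    hence "norm (1+t) = 1" using k by simp
    thus False using t by simp
  qed
  have q2: "(-(1+t))^(2*k) = p" unfolding p_def by (rule power_minus_even) simp
  show ?thesis
    unfolding Spoly_def poly_sum q2
  proof (rule sum.cong)
    fix j assume "j \<in> {0..N}"
    hence j: "j \<le> N" by simp
    have "(-(1+t))^(r*j^2 + m*j) = (-1)^(r*j^2+m*j) * (1+t)^(r*j^2+m*j)" by (rule power_minus)
    also have "\<dots> = (-1)^j * (1+t)^(r*j^2+m*j)" by (simp add: parity_exp[OF rm])
    finally show "(-(1+t))^(r*j^2 + m*j) * gauss_binom p N j = poly ((-1)^j * [:1,1:]^(r*j^2 + m*j) * QBp k N j) t"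
      using poly_QBp[OF p_def pp p1 j] by (simp add: poly_power add.commute)
  qed simp
qed



lemma main_lim:
  assumes rm: "odd (r+m)" and k: "k \<ge> 1"
    and low: "\<And>i. i < c \<Longrightarrow> coeff (Spoly r m k N) i = 0"
    and cnt: "\<And>t. (\<Prod>j<N. if odd (Suc j) then t else 1) = (t::real)^c"
    and B0: "Bf N 0 \<noteq> 0"
  shows "((\<lambda>q::real. (\<Sum>j=0..N. q^(r*j^2+m*j) * gauss_binom (q^(2*k)) N j) / qpoch (-q) q N)
          \<longlongrightarrow> coeff (Spoly r m k N) c / Bf N 0) (at (-1))"
proof -
  define S where "S = Spoly r m k N"
  define A where "A = poly (poly_shift c S)"
  have Sfac: "S = monom 1 c * poly_shift c S"
  proof (rule poly_eqI)
    fix i show "coeff S i = coeff (monom 1 c * poly_shift c S) i"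
      using low[of i] by (cases "i < c") (simp_all add: coeff_monom_mult coeff_poly_shift S_def)
  qed
  have polyS: "poly S t = t^c * A t" for t
    by (subst Sfac) (simp add: A_def poly_monom)
  have A0: "A 0 = coeff S c" by (simp add: A_def poly_0_coeff_0 coeff_poly_shift)
  have t0': "((\<lambda>q::real. -q-1) \<longlongrightarrow> -(-1)-1) (at (-1))" by (intro tendsto_intros)
  hence t0: "((\<lambda>q::real. -q-1) \<longlongrightarrow> 0) (at (-1))" by simp
  have lA: "((\<lambda>q. A (-q-1)) \<longlongrightarrow> A 0) (at (-1))"
    by (rule isCont_tendsto_compose[OF _ t0]) (simp add: A_def)
  have lB: "((\<lambda>q. Bf N (-q-1)) \<longlongrightarrow> Bf N 0) (at (-1))"
    by (rule isCont_tendsto_compose[OF isCont_Bf t0])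
  have lim: "((\<lambda>q. A (-q-1) / Bf N (-q-1)) \<longlongrightarrow> A 0 / Bf N 0) (at (-1))"
    by (rule tendsto_divide[OF lA lB B0])
  have ev: "eventually (\<lambda>q. A (-q-1) / Bf N (-q-1) =
      (\<Sum>j=0..N. q^(r*j^2+m*j) * gauss_binom (q^(2*k)) N j) / qpoch (-q) q N) (at (-1::real))"
    unfolding eventually_at
  proof (intro exI[of _ 1] conjI ballI impI)
    fix q :: real assume qq: "q \<noteq> -1 \<and> dist q (-1) < 1"
    define t where "t = -q-1"
    have qt: "q = -(1+t)" by (simp add: t_def)
    have t1: "t > -1" "t \<noteq> 0" using qq by (auto simp: t_def dist_real_def)
    have tc: "t^c \<noteq> 0" using t1 by simp
    have "(\<Sum>j=0..N. q^(r*j^2+m*j) * gauss_binom (q^(2*k)) N j) / qpoch (-q) q N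
        = poly S t / (t^c * Bf N t)"
      unfolding qt using num_eq[OF rm k t1, of N] den_eq[OF cnt[of t]] by (simp add: S_def)
    also have "\<dots> = A t / Bf N t" by (simp only: polyS) (rule mult_divide_mult_cancel_left[OF tc])
    finally show "A (-q-1) / Bf N (-q-1) = (\<Sum>j=0..N. q^(r*j^2+m*j) * gauss_binom (q^(2*k)) N j) / qpoch (-q) q N"
      by (simp add: t_def)
  qed simp
  have "((\<lambda>q::real. (\<Sum>j=0..N. q^(r*j^2+m*j) * gauss_binom (q^(2*k)) N j) / qpoch (-q) q N) \<longlongrightarrow> A 0 / Bf N 0) (at (-1))"
    using tendsto_cong[OF ev] lim by simp
  thus ?thesis by (simp add: A0 S_def)
qed

theorem corollary2p5:
  fixes r m k n :: nat
  assumes "k \<ge> 1" and "odd (r + m)"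
  shows "((\<lambda>q::real. (\<Sum>j=0..2*n. q ^ (r*j^2 + m*j) * gauss_binom (q ^ (2*k)) (2*n) j)
            / qpoch (-q) q (2*n))
          \<longlongrightarrow> (real_of_int (int k - int r)) ^ n) (at (-1))
       \<and> ((\<lambda>q::real. (\<Sum>j=0..2*n+1. q ^ (r*j^2 + m*j) * gauss_binom (q ^ (2*k)) (2*n+1) j)
            / qpoch (-q) q (2*n+1))
          \<longlongrightarrow> real ((2*n+1)*r + m) * (real_of_int (int k - int r)) ^ n) (at (-1))"
proof
  have hk: "real_of_int (int k - int r) = real k - real r" by simp
  define h where "h = real k - real r"
  show "((\<lambda>q::real. (\<Sum>j=0..2*n. q ^ (r*j^2 + m*j) * gauss_binom (q ^ (2*k)) (2*n) j)
            / qpoch (-q) q (2*n)) \<longlongrightarrow> (real_of_int (int k - int r)) ^ n) (at (-1))"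
  proof (rule tendsto_cong_limit)
    show "((\<lambda>q::real. (\<Sum>j=0..2*n. q ^ (r*j^2 + m*j) * gauss_binom (q ^ (2*k)) (2*n) j)
            / qpoch (-q) q (2*n)) \<longlongrightarrow> coeff (Spoly r m k (2*n)) n / Bf (2*n) 0) (at (-1))"
    proof (rule main_lim[OF assms(2,1)])
      show "coeff (Spoly r m k (2*n)) i = 0" if "i < n" for i
        using that by (simp add: coeff_Spoly Sf_low)
      show "(\<Prod>j<2*n. if odd (Suc j) then t else 1) = (t::real)^n" for t by (rule prod_t_even)
      show "Bf (2*n) 0 \<noteq> 0" by (simp add: Bf_even)
    qed
    have "coeff (Spoly r m k (2*n)) n = (-1)^n * h^n * fact (2*n) / fact n"
      by (simp add: coeff_Spoly Sf_even cf_def h_def)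
    thus "real_of_int (int k - int r) ^ n = coeff (Spoly r m k (2*n)) n / Bf (2*n) 0"
      by (simp add: Bf_even hk h_def)
  qed
  show "((\<lambda>q::real. (\<Sum>j=0..2*n+1. q ^ (r*j^2 + m*j) * gauss_binom (q ^ (2*k)) (2*n+1) j)
            / qpoch (-q) q (2*n+1))
          \<longlongrightarrow> real ((2*n+1)*r + m) * (real_of_int (int k - int r)) ^ n) (at (-1))"
  proof (rule tendsto_cong_limit)
    show "((\<lambda>q::real. (\<Sum>j=0..2*n+1. q ^ (r*j^2 + m*j) * gauss_binom (q ^ (2*k)) (2*n+1) j)
            / qpoch (-q) q (2*n+1)) \<longlongrightarrow> coeff (Spoly r m k (2*n+1)) (n+1) / Bf (2*n+1) 0) (at (-1))"
    proof (rule main_lim[OF assms(2,1)])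
      show "coeff (Spoly r m k (2*n+1)) i = 0" if "i < n+1" for i
        using that by (simp add: coeff_Spoly Sf_low)
      show "(\<Prod>j<2*n+1. if odd (Suc j) then t else 1) = (t::real)^(n+1)" for t
        using prod_t_odd[where n=n and t=t] by simp
      show "Bf (2*n+1) 0 \<noteq> 0" using Bf_odd[of n] by simp
    qed
    define X where "X = real r * real (2*n+1) + real m"
    define F where "F = (fact (2*n+1) :: real)"
    define G where "G = (fact n :: real)"
    define s where "s = ((-1::real)^Suc n)"
    have C: "coeff (Spoly r m k (2*n+1)) (n+1) = s * h^n * F / G * X"
      using Sf_odd[OF assms(1), of r n "real m"] by (simp add: coeff_Spoly cf_def h_def X_def F_def G_def s_def)
    have B: "Bf (2*n+1) 0 = s * F / G" by (simp only: Bf_odd s_def F_def G_def)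
    have nz: "s \<noteq> 0" "F \<noteq> 0" "G \<noteq> 0" by (simp_all add: s_def F_def G_def)
    have "coeff (Spoly r m k (2*n+1)) (n+1) / Bf (2*n+1) 0 = h^n * X"
      unfolding C B using nz by (simp add: field_simps)
    thus "real ((2*n+1)*r + m) * real_of_int (int k - int r) ^ n = coeff (Spoly r m k (2*n+1)) (n+1) / Bf (2*n+1) 0"
      by (simp add: hk h_def X_def algebra_simps)
  qed
qed


end
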